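(* Let $a,c,p\in\mathbb{C}$ with $-c\notin\mathbb{N}\cup\{0\}$. Define the sequence $(u_n)_{n\ge 0}$ by $u_0=1$, $u_1=a/c+p$ and, for all integers $n\ge 1$, \[ u_{n+1}=\frac{a+cp+2np+n}{(n+1)(c+n)}\,u_n-\frac{p(p+1)}{(n+1)(c+n)}\,u_{n-1}. \] Then \[ e^{pz}M(a,c;z)=\sum_{n=0}^\infty u_n z^n,\qquad z\in\mathbb{C}. \]
   Context: For $a\in\mathbb{C}$, $(a)_n=a(a+1)\cdots(a+n-1)$ denotes the Pochhammer symbol, with $(a)_0=1$. For $a,c\in\mathbb{C}$ with $-c\notin\mathbb{N}\cup\{0\}$, the confluent hypergeometric (Kummer) function is $M(a,c;z)=\sum_{n=0}^\infty \frac{(a)_n}{(c)_n\,n!}z^n$, $z\in\mathbb{C}$. *)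

theory Defs
  imports "HOL-Analysis.Analysis"
begin

definition kummerM :: "complex \<Rightarrow> complex \<Rightarrow> complex \<Rightarrow> complex" where
  "kummerM a c z = (\<Sum>n. pochhammer a n / (pochhammer c n * of_nat (fact n)) * z ^ n)"

fun useq :: "complex \<Rightarrow> complex \<Rightarrow> complex \<Rightarrow> nat \<Rightarrow> complex" where
  "useq a c p 0 = 1"
| "useq a c p (Suc 0) = a / c + p"
| "useq a c p (Suc (Suc n)) =
     (let m = of_nat (Suc n) :: complex in
       (a + c * p + 2 * m * p + m) / ((m + 1) * (c + m)) * useq a c p (Suc n)
       - p * (p + 1) / ((m + 1) * (c + m)) * useq a c p n)"

end

theory Submission imports Defs "HOL-Computational_Algebra.Formal_Power_Series" begin
definition mc :: "complex \<Rightarrow> complex \<Rightarrow> nat \<Rightarrow> complex" where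
  "mc a c k = pochhammer a k / (pochhammer c k * of_nat (fact k))"

lemma poch_nz:
  assumes "\<forall>k::nat. c \<noteq> - of_nat k"
  shows "pochhammer c n \<noteq> (0::complex)"
  using assms pochhammer_eq_0_iff by blast

lemma mc_rec:
  assumes "\<forall>k::nat. c \<noteq> - of_nat k"
  shows "of_nat (n+1) * (c + of_nat n) * mc a c (n+1) = (a + of_nat n) * mc a c n"
proof -
  have p: "pochhammer c n \<noteq> 0" using poch_nz[OF assms] .
  have q: "c + of_nat n \<noteq> 0" proof
    assume "c + of_nat n = 0"
    then have "c = - of_nat n" by (simp add: eq_neg_iff_add_eq_0)
    with assms show False by blast
  qed
  have g: "(1 + of_nat n :: complex) \<noteq> 0" by (metis of_nat_Suc of_nat_neq_0)
  have f: "(of_nat (fact n) :: complex) \<noteq> 0" by simp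
  have e: "mc a c (Suc n) = pochhammer a n * (a + of_nat n) / (pochhammer c n * (c + of_nat n) * (of_nat (n+1) * of_nat (fact n)))"
    unfolding mc_def pochhammer_Suc fact_Suc of_nat_mult by (simp add: mult_ac)
  show ?thesis unfolding Suc_eq_plus1[symmetric] e unfolding mc_def
    using p q f g by (simp add: divide_simps del: of_nat_fact of_nat_add)
qed

lemma E_deriv: "fps_deriv (Abs_fps (\<lambda>k. p ^ k / of_nat (fact k))) = fps_const (p::complex) * Abs_fps (\<lambda>k. p ^ k / of_nat (fact k))"
proof (rule fps_ext)
  fix n
  have "(of_nat (fact n) :: complex) \<noteq> 0" by simp
  moreover have "(1 + of_nat n :: complex) \<noteq> 0" by (metis of_nat_Suc of_nat_neq_0)
  ultimately show "fps_nth (fps_deriv (Abs_fps (\<lambda>k. p ^ k / of_nat (fact k)))) n = fps_nth (fps_const (p::complex) * Abs_fps (\<lambda>k. p ^ k / of_nat (fact k))) n"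
    unfolding fps_deriv_nth fps_mult_left_const_nth fps_nth_Abs_fps Suc_eq_plus1[symmetric] fact_Suc of_nat_mult
    by (simp add: divide_simps del: of_nat_fact)
qed

lemma M_ode:
  assumes "\<forall>k::nat. c \<noteq> - of_nat k"
  shows "fps_X * fps_deriv (fps_deriv (Abs_fps (mc a c))) + (fps_const c - fps_X) * fps_deriv (Abs_fps (mc a c))
     - fps_const a * Abs_fps (mc a c) = 0"
proof (rule fps_ext)
  fix n
  have r: "of_nat (n+1) * (c + of_nat n) * mc a c (n+1) = (a + of_nat n) * mc a c n" by (rule mc_rec[OF assms])
  show "fps_nth (fps_X * fps_deriv (fps_deriv (Abs_fps (mc a c))) + (fps_const c - fps_X) * fps_deriv (Abs_fps (mc a c))
     - fps_const a * Abs_fps (mc a c)) n = fps_nth 0 n"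
  proof (cases n)
    case 0 then show ?thesis using r by (simp add: fps_X_mult_nth algebra_simps)
  next
    case (Suc j) then show ?thesis using r by (simp add: fps_X_mult_nth algebra_simps)
  qed
qed

lemma V_ode:
  fixes E M :: "complex fps"
  assumes hE: "fps_deriv E = fps_const p * E"
    and hM: "fps_X * fps_deriv (fps_deriv M) + (fps_const c - fps_X) * fps_deriv M - fps_const a * M = 0"
  shows "fps_X * fps_deriv (fps_deriv (E * M)) + (fps_const c - fps_const (2*p+1) * fps_X) * fps_deriv (E * M)
     + (fps_const (p*p+p) * fps_X - fps_const (c*p+a)) * (E * M) = 0"
proof -
  have d1: "fps_deriv (E*M) = fps_const p * (E*M) + E * fps_deriv M"
    by (simp add: fps_deriv_mult hE algebra_simps)
  have d2: "fps_deriv (fps_deriv (E*M)) = fps_const p * fps_deriv (E*M) + fps_const p * E * fps_deriv M + E * fps_deriv (fps_deriv M)"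
    unfolding d1 by (simp add: fps_deriv_mult hE algebra_simps)
  have c1: "fps_const (2*p+1) = 2 * fps_const p + 1" by (simp add: fps_const_add fps_const_mult)
  have c2: "fps_const (p*p+p) = fps_const p * fps_const p + fps_const p" by (simp add: fps_const_add fps_const_mult)
  have c3: "fps_const (c*p+a) = fps_const c * fps_const p + fps_const a" by (simp add: fps_const_add fps_const_mult)
  have "fps_X * fps_deriv (fps_deriv (E * M)) + (fps_const c - fps_const (2*p+1) * fps_X) * fps_deriv (E * M)
     + (fps_const (p*p+p) * fps_X - fps_const (c*p+a)) * (E * M)
     = E * (fps_X * fps_deriv (fps_deriv M) + (fps_const c - fps_X) * fps_deriv M - fps_const a * M)"
    unfolding d2 unfolding d1 c1 c2 c3 by algebra
  also have "\<dots> = 0" using hM by simp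
  finally show ?thesis .
qed

lemma V_rec:
  fixes V :: "complex fps"
  assumes h: "fps_X * fps_deriv (fps_deriv V) + (fps_const c - fps_const (2*p+1) * fps_X) * fps_deriv V
     + (fps_const (p*p+p) * fps_X - fps_const (c*p+a)) * V = 0"
  shows "of_nat (j+2) * (c + of_nat (j+1)) * fps_nth V (j+2)
     = (a + c*p + 2 * of_nat (j+1) * p + of_nat (j+1)) * fps_nth V (j+1) - p*(p+1) * fps_nth V j"
proof -
  have "fps_nth (fps_X * fps_deriv (fps_deriv V) + (fps_const c - fps_const (2*p+1) * fps_X) * fps_deriv V
     + (fps_const (p*p+p) * fps_X - fps_const (c*p+a)) * V) (Suc j) = 0"
    using h by simp
  then have "of_nat (j+1) * of_nat (j+2) * fps_nth V (j+2) + c * (of_nat (j+2) * fps_nth V (j+2))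
      - (2*p+1) * (of_nat (j+1) * fps_nth V (j+1)) + (p*p+p) * fps_nth V j - (c*p+a) * fps_nth V (j+1) = 0"
    apply (simp add: ring_distribs fps_X_mult_nth mult.assoc del: fps_const_add fps_const_mult) by algebra
  then show ?thesis by (simp add: algebra_simps)
qed

lemma coeff_eq:
  assumes "\<forall>k::nat. c \<noteq> - of_nat k"
  shows "fps_nth (Abs_fps (\<lambda>k. p ^ k / of_nat (fact k)) * Abs_fps (mc a c)) n = useq a c p n"
proof -
  define V where "V = Abs_fps (\<lambda>k. p ^ k / of_nat (fact k)) * Abs_fps (mc a c)"
  have ode: "fps_X * fps_deriv (fps_deriv V) + (fps_const c - fps_const (2*p+1) * fps_X) * fps_deriv V
     + (fps_const (p*p+p) * fps_X - fps_const (c*p+a)) * V = 0"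
    unfolding V_def by (rule V_ode[OF E_deriv M_ode[OF assms]])
  have c0: "c \<noteq> 0" using assms by (metis minus_zero of_nat_0)
  have v0: "fps_nth V 0 = 1" unfolding V_def by (simp add: fps_mult_nth mc_def)
  have v1: "fps_nth V 1 = a / c + p" unfolding V_def using c0 by (simp add: fps_mult_nth mc_def)
  have "fps_nth V n = useq a c p n \<and> fps_nth V (Suc n) = useq a c p (Suc n)"
  proof (induction n)
    case 0 then show ?case using v0 v1 by simp
  next
    case (Suc n)
    define m where "m = (of_nat (Suc n) :: complex)"
    have r: "(m + 1) * (c + m) * fps_nth V (Suc (Suc n))
     = (a + c*p + 2 * m * p + m) * fps_nth V (Suc n) - p*(p+1) * fps_nth V n"
      using V_rec[OF ode, of n] unfolding m_def by (simp add: add_ac)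
    have nz1: "m + 1 \<noteq> 0" unfolding m_def by (metis of_nat_Suc of_nat_neq_0 add.commute)
    have nz2: "c + m \<noteq> 0" unfolding m_def
    proof
      assume "c + of_nat (Suc n) = 0"
      then have "c = - of_nat (Suc n)" by (simp only: eq_neg_iff_add_eq_0)
      with assms show False by blast
    qed
    have "fps_nth V (Suc (Suc n)) = (a + c * p + 2 * m * p + m) / ((m + 1) * (c + m)) * fps_nth V (Suc n)
       - p * (p + 1) / ((m + 1) * (c + m)) * fps_nth V n"
    proof -
      have D: "(m+1)*(c+m) \<noteq> 0" using nz1 nz2 by simp
      have "fps_nth V (Suc (Suc n)) = ((m+1)*(c+m) * fps_nth V (Suc (Suc n))) / ((m+1)*(c+m))"
        using D by simp
      also have "\<dots> = ((a + c*p + 2 * m * p + m) * fps_nth V (Suc n) - p*(p+1) * fps_nth V n) / ((m+1)*(c+m))"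
        using r by simp
      also have "\<dots> = (a + c * p + 2 * m * p + m) / ((m + 1) * (c + m)) * fps_nth V (Suc n)
       - p * (p + 1) / ((m + 1) * (c + m)) * fps_nth V n"
        by (simp add: diff_divide_distrib)
      finally show ?thesis .
    qed
    then have "fps_nth V (Suc (Suc n)) = useq a c p (Suc (Suc n))"
      using Suc.IH unfolding m_def by (simp add: Let_def)
    then show ?case using Suc.IH by simp
  qed
  then have "fps_nth V n = useq a c p n" by simp
  then show ?thesis unfolding V_def .
qed

lemma ratio_lim:
  assumes "\<forall>k::nat. c \<noteq> - of_nat k"
  shows "(\<lambda>n. (a + of_nat n) * z / ((of_nat n + 1) * (c + of_nat n))) \<longlonglongrightarrow> (0::complex)"
proof -
  have "(\<lambda>n. z * (a * (1/of_nat n) + 1) * (1/of_nat n) / ((1 + 1/of_nat n) * (c * (1/of_nat n) + 1)))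
        \<longlonglongrightarrow> z*(a*0+1)*0/((1+0)*(c*0+1))"
    by (intro tendsto_intros) auto
  then have L: "(\<lambda>n. z * (a * (1/of_nat n) + 1) * (1/of_nat n) / ((1 + 1/of_nat n) * (c * (1/of_nat n) + 1)))
        \<longlonglongrightarrow> 0" by simp
  have ev: "eventually (\<lambda>n. z * (a * (1/of_nat n) + 1) * (1/of_nat n) / ((1 + 1/of_nat n) * (c * (1/of_nat n) + 1))
     = (a + of_nat n) * z / ((of_nat n + 1) * (c + of_nat n))) sequentially"
    using eventually_gt_at_top[of 0]
  proof eventually_elim
    case (elim n)
    have n0: "(of_nat n :: complex) \<noteq> 0" using elim by simp
    have q: "c + of_nat n \<noteq> 0"
    proof
      assume "c + of_nat n = 0"
      then have "c = - of_nat n" by (simp only: eq_neg_iff_add_eq_0)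
      with assms show False by blast
    qed
    have g: "(of_nat n + 1 :: complex) \<noteq> 0" by (metis of_nat_Suc of_nat_neq_0 add.commute)
    have e1: "a * (1/of_nat n) + 1 = (a + of_nat n) / of_nat n" using n0 by (simp add: field_simps)
    have e2: "1 + 1/of_nat n = (of_nat n + 1) / (of_nat n :: complex)" using n0 by (simp add: field_simps)
    have e3: "c * (1/of_nat n) + 1 = (c + of_nat n) / of_nat n" using n0 by (simp add: field_simps)
    show ?case unfolding e1 e2 e3 using n0 q g by (simp add: divide_simps)
  qed
  show ?thesis using Lim_transform_eventually[OF L ev] .
qed

lemma summable_M:
  assumes "\<forall>k::nat. c \<noteq> - of_nat k"
  shows "summable (\<lambda>n. norm (mc a c n * z ^ n))"
proof -
  have "(\<lambda>n. norm ((a + of_nat n) * z / ((of_nat n + 1) * (c + of_nat n)))) \<longlonglongrightarrow> norm (0::complex)"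
    by (rule tendsto_norm[OF ratio_lim[OF assms]])
  then have "eventually (\<lambda>n. norm ((a + of_nat n) * z / ((of_nat n + 1) * (c + of_nat n))) < 1/2) sequentially"
    by (intro order_tendstoD(2)) auto
  then obtain N where N: "\<And>n. n \<ge> N \<Longrightarrow> norm ((a + of_nat n) * z / ((of_nat n + 1) * (c + of_nat n))) < 1/2"
    unfolding eventually_sequentially by blast
  show ?thesis
  proof (rule summable_ratio_test[of "1/2" N])
    fix n assume "n \<ge> N"
    have q: "c + of_nat n \<noteq> 0"
    proof
      assume "c + of_nat n = 0"
      then have "c = - of_nat n" by (simp only: eq_neg_iff_add_eq_0)
      with assms show False by blast
    qed
    have g: "(of_nat n + 1 :: complex) \<noteq> 0" by (metis of_nat_Suc of_nat_neq_0 add.commute)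
    have r: "of_nat (n+1) * (c + of_nat n) * mc a c (n+1) = (a + of_nat n) * mc a c n" by (rule mc_rec[OF assms])
    have "mc a c (Suc n) = (a + of_nat n) * mc a c n / ((of_nat n + 1) * (c + of_nat n))"
      using r q g apply (simp add: divide_simps) by algebra
    then have "mc a c (Suc n) * z ^ Suc n = ((a + of_nat n) * z / ((of_nat n + 1) * (c + of_nat n))) * (mc a c n * z ^ n)"
      by (simp add: mult_ac)
    then have "norm (mc a c (Suc n) * z ^ Suc n) = norm ((a + of_nat n) * z / ((of_nat n + 1) * (c + of_nat n))) * norm (mc a c n * z ^ n)"
      by (metis norm_mult)
    also have "\<dots> \<le> 1/2 * norm (mc a c n * z ^ n)"
      using N[OF \<open>n \<ge> N\<close>] by (intro mult_right_mono) auto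
    finally show "norm (norm (mc a c (Suc n) * z ^ Suc n)) \<le> 1/2 * norm (norm (mc a c n * z ^ n))" by simp
  qed simp
qed

theorem theorem2p1:
  fixes a c p z :: complex
  assumes "\<forall>k::nat. c \<noteq> - of_nat k"
  shows "(\<lambda>n. useq a c p n * z ^ n) sums (exp (p * z) * kummerM a c z)"
proof -
  have S: "(\<lambda>k. \<Sum>i\<le>k. ((p*z)^i /\<^sub>R fact i) * (mc a c (k-i) * z^(k-i))) sums
      ((\<Sum>k. (p*z)^k /\<^sub>R fact k) * (\<Sum>k. mc a c k * z^k))"
    by (rule Cauchy_product_sums[OF summable_norm_exp summable_M[OF assms]])
  have e1: "(\<Sum>k. (p*z)^k /\<^sub>R fact k) = exp (p*z)" by (simp add: exp_def)
  have e2: "(\<Sum>k. mc a c k * z^k) = kummerM a c z" by (simp add: kummerM_def mc_def)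
  have e3: "(\<Sum>i\<le>k. ((p*z)^i /\<^sub>R fact i) * (mc a c (k-i) * z^(k-i))) = useq a c p k * z ^ k" for k
  proof -
    have "(\<Sum>i\<le>k. ((p*z)^i /\<^sub>R fact i) * (mc a c (k-i) * z^(k-i)))
        = (\<Sum>i\<le>k. (p ^ i / of_nat (fact i)) * mc a c (k-i)) * z ^ k"
      unfolding sum_distrib_right
    proof (rule sum.cong[OF refl])
      fix i assume "i \<in> {..k}"
      then have "z ^ k = z ^ i * z ^ (k - i)" by (simp add: power_add[symmetric])
      then show "((p*z)^i /\<^sub>R fact i) * (mc a c (k-i) * z^(k-i)) = (p ^ i / of_nat (fact i)) * mc a c (k-i) * z ^ k"
        by (simp add: scaleR_conv_of_real power_mult_distrib divide_inverse mult_ac)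
    qed
    also have "(\<Sum>i\<le>k. (p ^ i / of_nat (fact i)) * mc a c (k-i)) = useq a c p k"
      using coeff_eq[OF assms, of p a k] by (simp add: fps_mult_nth atLeast0AtMost)
    finally show ?thesis .
  qed
  show ?thesis using S unfolding e1 e2 e3 .
qed
end
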